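(* Let $R>0$ and let $f\colon\mathbb{R}\to(0,\infty)$ be a continuously differentiable convex function. Put $\alpha(t)=\dfrac{tf'(t)-f(t)}{\sqrt{1+f'(t)^2}}$ and $C^+=\{t>0\mid\alpha(t)\ge R\}$. If $t_0\in C^+$, then $\alpha(t)\ge\alpha(t_0)$ for every $t>t_0$; in particular $t\in C^+$ for every $t>t_0$. *)

theory Defs
  imports "HOL-Analysis.Analysis"
begin

definition alpha_fun :: "(real \<Rightarrow> real) \<Rightarrow> (real \<Rightarrow> real) \<Rightarrow> real \<Rightarrow> real" where
  "alpha_fun f f' t = (t * f' t - f t) / sqrt (1 + (f' t)^2)"

definition Cplus :: "(real \<Rightarrow> real) \<Rightarrow> (real \<Rightarrow> real) \<Rightarrow> real \<Rightarrow> real set" where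
  "Cplus f f' R = {t. t > 0 \<and> alpha_fun f f' t \<ge> R}"

end

theory Submission
  imports Defs
begin

theorem lemma3:
  fixes f f' :: "real \<Rightarrow> real" and R t0 :: real
  assumes "R > 0"
    and "\<And>t. f t > 0"
    and "\<And>t. (f has_real_derivative f' t) (at t)"
    and "continuous_on UNIV f'"
    and "convex_on UNIV f"
    and "t0 \<in> Cplus f f' R"
  shows "\<forall>t > t0. alpha_fun f f' t \<ge> alpha_fun f f' t0 \<and> t \<in> Cplus f f' R"
proof (intro allI impI)
  fix t assume tt: "t > t0"
  have tan: "f' c * (x - c) \<le> f x - f c" for c x
    by (rule convex_on_imp_above_tangent[OF assms(5)]) (auto intro: has_field_derivative_at_within assms(3))
  define p where "p = f' t0"
  define q where "q = f' t"
  define a where "a = t0 * p - f t0"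
  define b where "b = t * q - f t"
  have t0: "t0 > 0" and Rle: "R \<le> a / sqrt (1 + p^2)"
    using assms(6) by (auto simp: Cplus_def alpha_fun_def a_def p_def)
  have sp: "sqrt (1 + p^2) > 0" and sq: "sqrt (1 + q^2) > 0"
    by (auto intro: real_sqrt_gt_zero add_pos_nonneg)
  have apos: "a > 0"
  proof (rule ccontr)
    assume "\<not> a > 0"
    hence "a / sqrt (1 + p^2) \<le> 0" using sp by (simp add: divide_nonpos_pos)
    thus False using Rle assms(1) by linarith
  qed
  have T1: "p * (t - t0) \<le> f t - f t0" using tan[of t0 t] p_def by simp
  have T2: "q * (t0 - t) \<le> f t0 - f t" using tan[of t t0] q_def by simp
  have pq: "p \<le> q"
  proof -
    have "p * (t - t0) \<le> q * (t - t0)" using T1 T2 by (simp add: algebra_simps)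
    thus ?thesis using tt by simp
  qed
  have ft0: "f t0 > 0" using assms(2) by simp
  have tp: "t0 * p > a" using ft0 a_def by simp
  have ppos: "p > 0"
  proof (rule ccontr)
    assume "\<not> p > 0"
    hence "t0 * p \<le> 0" using t0 by (simp add: mult_nonneg_nonpos)
    thus False using tp apos by linarith
  qed
  have b1: "b \<ge> a + t0 * (q - p)" using T2 unfolding a_def b_def by (simp add: algebra_simps)
  have "t0 * p * (q - p) \<ge> a * (q - p)" using tp pq by (intro mult_right_mono) auto
  hence "b * p \<ge> a * q"
  proof -
    assume h: "t0 * p * (q - p) \<ge> a * (q - p)"
    have "b * p \<ge> (a + t0 * (q - p)) * p" using b1 ppos by (intro mult_right_mono) auto
    thus ?thesis using h by (simp add: algebra_simps)
  qed
  have sqq: "p * sqrt (1 + q^2) \<le> q * sqrt (1 + p^2)"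
  proof -
    have "p * sqrt (1 + q^2) = sqrt (p^2 * (1 + q^2))" using ppos by (simp add: real_sqrt_mult)
    also have "\<dots> \<le> sqrt (q^2 * (1 + p^2))"
    proof (rule real_sqrt_le_mono)
      have "p^2 \<le> q^2" using pq ppos by (simp add: power_mono)
      thus "p^2 * (1 + q^2) \<le> q^2 * (1 + p^2)" by (simp add: algebra_simps)
    qed
    also have "\<dots> = q * sqrt (1 + p^2)" using ppos pq by (simp add: real_sqrt_mult)
    finally show ?thesis .
  qed
  have "p * (a * sqrt (1 + q^2)) \<le> p * (b * sqrt (1 + p^2))"
  proof -
    have "p * (a * sqrt (1 + q^2)) = a * (p * sqrt (1 + q^2))" by simp
    also have "\<dots> \<le> a * (q * sqrt (1 + p^2))" using sqq apos by (intro mult_left_mono) auto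
    also have "\<dots> = (a * q) * sqrt (1 + p^2)" by simp
    also have "\<dots> \<le> (b * p) * sqrt (1 + p^2)" using \<open>b * p \<ge> a * q\<close> sp by (intro mult_right_mono) auto
    finally show ?thesis by (simp add: mult_ac)
  qed
  hence key: "a * sqrt (1 + q^2) \<le> b * sqrt (1 + p^2)" using ppos by simp
  have main: "a / sqrt (1 + p^2) \<le> b / sqrt (1 + q^2)"
    using key sp sq by (simp add: frac_le_eq divide_nonpos_pos)
  have "alpha_fun f f' t0 \<le> alpha_fun f f' t"
    using main by (simp add: alpha_fun_def a_def b_def p_def q_def)
  moreover have "t \<in> Cplus f f' R"
    using main Rle tt t0 by (simp add: Cplus_def alpha_fun_def b_def q_def)
  ultimately show "alpha_fun f f' t \<ge> alpha_fun f f' t0 \<and> t \<in> Cplus f f' R" by simp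
qed

end
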